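(* Let $(a_{n,k})_{n,k\ge 1}$ be complex numbers such that every series of the form $\sum_{n=1}^{\infty}\prod_{j=1}^{m}a_{n,k_j}$ (with $m\in\mathbb{N}$, $k_1,\dots,k_m\in\mathbb{N}$) converges. Let $m\in\mathbb{N}$, $k_1,\dots,k_m\in\mathbb{N}$ and $L=[k_1,\dots,k_m]$. Then $$\sum_{\substack{n_1,\dots,n_m\ge 1\\ \text{pairwise distinct}}}\ \prod_{j=1}^{m}a_{n_j,k_j}=\sum_{\sigma\in S_m}\operatorname{sign}(\sigma)\,\mathbb{A}_{\sigma,L}.$$
   Context: $S_m$ is the symmetric group on $\{1,\dots,m\}$ and $\operatorname{sign}(\sigma)$ the sign of a permutation. For $\sigma\in S_m$, write $\sigma$ as a product of disjoint cycles $C_1,\dots,C_{r}$, where fixed points are kept as cycles of length one (so the cycles partition $\{1,\dots,m\}$). Then $$\mathbb{A}_{\sigma,L}:=\prod_{t=1}^{r}\Big(\sum_{n=1}^{\infty}\prod_{i\in C_t}a_{n,k_i}\Big).$$ For example, for $\sigma=(1\,2\,4)(3\,6)(5)\in S_6$, $\mathbb{A}_{\sigma,L}=\big(\sum_n a_{n,k_1}a_{n,k_2}a_{n,k_4}\big)\big(\sum_n a_{n,k_3}a_{n,k_6}\big)\big(\sum_n a_{n,k_5}\big)$. *)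

theory Defs
  imports "HOL-Analysis.Analysis" "HOL-Combinatorics.Combinatorics"
begin

definition perm_cycles :: "nat \<Rightarrow> (nat \<Rightarrow> nat) \<Rightarrow> nat set set" where
  "perm_cycles m \<sigma> = (\<lambda>i. orbit \<sigma> i) ` {1..m}"

text \<open>A_{sigma,L} for L = [k 1, ..., k m]; the series runs over n >= 1.\<close>
definition A_sigma :: "(nat \<Rightarrow> nat \<Rightarrow> complex) \<Rightarrow> nat \<Rightarrow> (nat \<Rightarrow> nat) \<Rightarrow> (nat \<Rightarrow> nat) \<Rightarrow> complex" where
  "A_sigma a m k \<sigma> = (\<Prod>C\<in>perm_cycles m \<sigma>. (\<Sum>n. \<Prod>i\<in>C. a (Suc n) (k i)))"

definition distinct_sum :: "(nat \<Rightarrow> nat \<Rightarrow> complex) \<Rightarrow> nat \<Rightarrow> (nat \<Rightarrow> nat) \<Rightarrow> nat \<Rightarrow> complex" where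
  "distinct_sum a m k N =
     (\<Sum>ns\<in>{ns \<in> {1..m} \<rightarrow>\<^sub>E {1..N}. inj_on ns {1..m}}. \<Prod>j=1..m. a (ns j) (k j))"

end

theory Submission
  imports Defs
begin

lemma orbit_const:
  assumes "\<sigma> permutes I" "\<forall>x\<in>I. ns (\<sigma> x) = ns x" "i \<in> I" "j \<in> orbit \<sigma> i"
  shows "ns j = ns i"
  using assms(4)
proof induction
  case base then show ?case using assms by auto
next
  case (step y)
  have "y \<in> I" using permutes_orbit_subset[OF assms(1,3)] step.hyps by auto
  then show ?case using assms(2) step.IH by auto
qed

lemma orbit_eq_perm:
  assumes "permutation \<sigma>" "j \<in> orbit \<sigma> i"
  shows "orbit \<sigma> j = orbit \<sigma> i"
  by (rule orbit_cyclic_eq3[OF cyclic_on_orbit'[OF assms(1)] assms(2)])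

lemma cycles_expand:
  fixes f :: "nat \<Rightarrow> 'a \<Rightarrow> complex"
  assumes perm: "\<sigma> permutes I" and fin: "finite I" and finS: "finite S"
  shows "(\<Prod>C\<in>(\<lambda>i. orbit \<sigma> i) ` I. \<Sum>n\<in>S. \<Prod>i\<in>C. f n i) =
         (\<Sum>ns\<in>{ns \<in> I \<rightarrow>\<^sub>E S. \<forall>i\<in>I. ns (\<sigma> i) = ns i}. \<Prod>i\<in>I. f (ns i) i)"
proof -
  define Cs where "Cs = (\<lambda>i. orbit \<sigma> i) ` I"
  have pm: "permutation \<sigma>" using perm fin permutation_permutes by blast
  have self: "\<And>i. i \<in> orbit \<sigma> i" using permutation_self_in_orbit[OF pm] .
  have sub: "\<And>i. i \<in> I \<Longrightarrow> orbit \<sigma> i \<subseteq> I" using permutes_orbit_subset[OF perm] .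
  have finC: "finite Cs" unfolding Cs_def using fin by simp
  have Cs_obt: "\<exists>j\<in>I. C = orbit \<sigma> j" if "C \<in> Cs" for C using that unfolding Cs_def by blast
  have finCC: "finite C" if C: "C \<in> Cs" for C
  proof -
    obtain j where "j \<in> I" "C = orbit \<sigma> j" using Cs_obt[OF C] by blast
    then show ?thesis using finite_subset[OF sub fin] by blast
  qed
  have UCs: "\<Union>Cs = I"
  proof
    show "\<Union>Cs \<subseteq> I"
    proof
      fix x assume "x \<in> \<Union>Cs"
      then obtain C where "C \<in> Cs" "x \<in> C" by blast
      then obtain j where "j \<in> I" "C = orbit \<sigma> j" using Cs_obt by blast
      then show "x \<in> I" using sub \<open>x \<in> C\<close> by blast
    qed
    show "I \<subseteq> \<Union>Cs"
    proof
      fix x assume "x \<in> I"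
      then have "orbit \<sigma> x \<in> Cs" unfolding Cs_def by blast
      then show "x \<in> \<Union>Cs" using self[of x] by blast
    qed
  qed
  have disj: "C1 \<inter> C2 = {}" if CC: "C1 \<in> Cs" "C2 \<in> Cs" "C1 \<noteq> C2" for C1 C2
  proof (rule ccontr)
    assume "C1 \<inter> C2 \<noteq> {}"
    then obtain x where x: "x \<in> C1" "x \<in> C2" by blast
    obtain i where i: "C1 = orbit \<sigma> i" using Cs_obt[OF CC(1)] by blast
    obtain j where j: "C2 = orbit \<sigma> j" using Cs_obt[OF CC(2)] by blast
    have "orbit \<sigma> x = orbit \<sigma> i" using x(1) unfolding i by (rule orbit_eq_perm[OF pm])
    moreover have "orbit \<sigma> x = orbit \<sigma> j" using x(2) unfolding j by (rule orbit_eq_perm[OF pm])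
    ultimately have "C1 = C2" using i j by simp
    then show False using CC(3) by simp
  qed
  define h where "h g = (\<lambda>i. if i \<in> I then g (orbit \<sigma> i) else undefined)" for g :: "'a set \<Rightarrow> nat"
  have "(\<Prod>C\<in>Cs. \<Sum>n\<in>S. \<Prod>i\<in>C. f n i) = (\<Sum>g\<in>PiE Cs (\<lambda>_. S). \<Prod>C\<in>Cs. \<Prod>i\<in>C. f (g C) i)"
    by (rule prod_sum_PiE[OF finC finS])
  also have "\<dots> = (\<Sum>g\<in>PiE Cs (\<lambda>_. S). \<Prod>i\<in>I. f (h g i) i)"
  proof (rule sum.cong[OF refl])
    fix g assume "g \<in> PiE Cs (\<lambda>_. S)"
    have "(\<Prod>i\<in>\<Union>Cs. f (h g i) i) = prod (prod (\<lambda>i. f (h g i) i)) Cs"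
    proof -
      have A: "\<forall>A\<in>Cs. finite A" using finCC by blast
      have B: "\<forall>A\<in>Cs. \<forall>B\<in>Cs. A \<noteq> B \<longrightarrow> A \<inter> B = {}" using disj by blast
      show ?thesis using prod.Union_disjoint[OF A B, of "\<lambda>i. f (h g i) i"] by (simp add: comp_def)
    qed
    then have "(\<Prod>i\<in>I. f (h g i) i) = (\<Prod>C\<in>Cs. \<Prod>i\<in>C. f (h g i) i)"
      using UCs by simp
    also have "\<dots> = (\<Prod>C\<in>Cs. \<Prod>i\<in>C. f (g C) i)"
    proof (rule prod.cong[OF refl], rule prod.cong[OF refl])
      fix C i assume "C \<in> Cs" "i \<in> C"
      then obtain j where j: "j \<in> I" "C = orbit \<sigma> j" using Cs_obt by blast
      then have "i \<in> I" using sub \<open>i \<in> C\<close> by auto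
      moreover have "orbit \<sigma> i = C" using \<open>i \<in> C\<close> unfolding j(2) by (rule orbit_eq_perm[OF pm])
      ultimately show "f (h g i) i = f (g C) i" by (simp add: h_def)
    qed
    finally show "(\<Prod>C\<in>Cs. \<Prod>i\<in>C. f (g C) i) = (\<Prod>i\<in>I. f (h g i) i)" by simp
  qed
  also have "\<dots> = (\<Sum>ns\<in>h ` PiE Cs (\<lambda>_. S). \<Prod>i\<in>I. f (ns i) i)"
  proof (rule sum.reindex[symmetric, unfolded comp_def])
    show "inj_on h (PiE Cs (\<lambda>_. S))"
    proof (rule inj_onI)
      fix g1 g2 assume g: "g1 \<in> PiE Cs (\<lambda>_. S)" "g2 \<in> PiE Cs (\<lambda>_. S)" "h g1 = h g2"
      show "g1 = g2"
      proof
        fix C show "g1 C = g2 C"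
        proof (cases "C \<in> Cs")
          case True
          then obtain j where j: "j \<in> I" "C = orbit \<sigma> j" using Cs_obt by blast
          have "h g1 j = h g2 j" using g by simp
          then show ?thesis using j by (simp add: h_def)
        qed (metis g(1) g(2) PiE_arb)
      qed
    qed
  qed
  also have "h ` PiE Cs (\<lambda>_. S) = {ns \<in> I \<rightarrow>\<^sub>E S. \<forall>i\<in>I. ns (\<sigma> i) = ns i}"
  proof (intro set_eqI iffI)
    fix ns assume "ns \<in> h ` PiE Cs (\<lambda>_. S)"
    then obtain g where g: "g \<in> PiE Cs (\<lambda>_. S)" "ns = h g" by (rule imageE) simp
    have "ns \<in> I \<rightarrow>\<^sub>E S"
    proof (rule PiE_I)
      fix i assume "i \<in> I"
      then have "orbit \<sigma> i \<in> Cs" unfolding Cs_def by (rule imageI)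
      then have "g (orbit \<sigma> i) \<in> S" by (rule PiE_mem[OF g(1)])
      then show "ns i \<in> S" using \<open>i \<in> I\<close> by (simp add: g(2) h_def)
    next
      fix i assume "i \<notin> I"
      then show "ns i = undefined" by (simp add: g(2) h_def)
    qed
    moreover have "\<forall>i\<in>I. ns (\<sigma> i) = ns i"
    proof
      fix i assume "i \<in> I"
      then have "\<sigma> i \<in> I" using permutes_in_image[OF perm] by blast
      then show "ns (\<sigma> i) = ns i" using \<open>i \<in> I\<close> permutation_orbit_step[OF pm, of i] by (simp add: g(2) h_def)
    qed
    ultimately show "ns \<in> {ns \<in> I \<rightarrow>\<^sub>E S. \<forall>i\<in>I. ns (\<sigma> i) = ns i}" by simp
  next
    fix ns assume ns: "ns \<in> {ns \<in> I \<rightarrow>\<^sub>E S. \<forall>i\<in>I. ns (\<sigma> i) = ns i}"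
    have nsP: "ns \<in> I \<rightarrow>\<^sub>E S" using ns by blast
    have ns2: "\<forall>x\<in>I. ns (\<sigma> x) = ns x" using ns by blast
    define g where "g = restrict (\<lambda>C. ns (SOME i. i \<in> C)) Cs"
    have "g \<in> PiE Cs (\<lambda>_. S)"
    proof -
      have "ns (SOME i. i \<in> C) \<in> S" if "C \<in> Cs" for C
      proof -
        obtain j where j: "j \<in> I" "C = orbit \<sigma> j" using Cs_obt \<open>C \<in> Cs\<close> by blast
        have "(SOME i. i \<in> C) \<in> C" using self j by (metis someI)
        then have "(SOME i. i \<in> C) \<in> I" using sub j by auto
        then show ?thesis by (rule PiE_mem[OF nsP])
      qed
      then show ?thesis unfolding g_def restrict_PiE_iff by blast
    qed
    moreover have "ns = h g"
    proof
      fix i show "ns i = h g i"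
      proof (cases "i \<in> I")
        case True
        have "(SOME j. j \<in> orbit \<sigma> i) \<in> orbit \<sigma> i" using self by (metis someI)
        moreover note ns2
        ultimately have "ns (SOME j. j \<in> orbit \<sigma> i) = ns i"
          by (rule orbit_const[OF perm _ True, rotated])
        moreover have "orbit \<sigma> i \<in> Cs" unfolding Cs_def using True by (rule imageI)
        ultimately show ?thesis using True by (simp add: h_def g_def)
      next
        case False
        have "ns i = undefined" using nsP False by (rule PiE_arb)
        moreover have "h g i = undefined" using False by (simp add: h_def)
        ultimately show ?thesis by simp
      qed
    qed
    ultimately show "ns \<in> h ` PiE Cs (\<lambda>_. S)" by blast
  qed
  finally show ?thesis unfolding Cs_def .
qed

lemma sign_sum:
  fixes I :: "'a set" and ns :: "'a \<Rightarrow> 'b"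
  assumes fin: "finite I"
  shows "(\<Sum>\<sigma>\<in>{\<sigma>. \<sigma> permutes I \<and> (\<forall>i\<in>I. ns (\<sigma> i) = ns i)}. (of_int (sign \<sigma>) :: complex))
         = (if inj_on ns I then 1 else 0)"
proof (cases "inj_on ns I")
  case True
  have "{\<sigma>. \<sigma> permutes I \<and> (\<forall>i\<in>I. ns (\<sigma> i) = ns i)} = {id}"
  proof (intro set_eqI iffI)
    fix \<sigma> assume s: "\<sigma> \<in> {\<sigma>. \<sigma> permutes I \<and> (\<forall>i\<in>I. ns (\<sigma> i) = ns i)}"
    then have sp: "\<sigma> permutes I" and sf: "\<forall>i\<in>I. ns (\<sigma> i) = ns i" by simp_all
    have "\<sigma> i = i" for i
    proof (cases "i \<in> I")
      case iI: True
      then have "\<sigma> i \<in> I" by (rule permutes_in_image[OF sp, THEN iffD2])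
      moreover have "ns (\<sigma> i) = ns i" using sf iI by blast
      ultimately show ?thesis using inj_onD[OF \<open>inj_on ns I\<close> _ _ iI] by blast
    next
      case False
      then show ?thesis by (rule permutes_not_in[OF sp])
    qed
    then have "\<sigma> = id" by (simp add: fun_eq_iff)
    then show "\<sigma> \<in> {id}" by simp
  next
    fix \<sigma> :: "'a \<Rightarrow> 'a" assume "\<sigma> \<in> {id}"
    then show "\<sigma> \<in> {\<sigma>. \<sigma> permutes I \<and> (\<forall>i\<in>I. ns (\<sigma> i) = ns i)}" by (simp add: permutes_id)
  qed
  then show ?thesis using True by simp
next
  case False
  then obtain p q where pq: "p \<in> I" "q \<in> I" "p \<noteq> q" "ns p = ns q" unfolding inj_on_def by blast
  define \<tau> where "\<tau> = Transposition.transpose p q"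
  define U where "U = {\<sigma>. \<sigma> permutes I \<and> (\<forall>i\<in>I. ns (\<sigma> i) = ns i)}"
  have tp: "\<tau> permutes I" unfolding \<tau>_def by (rule permutes_swap_id[OF pq(1,2)])
  have nst: "ns (\<tau> x) = ns x" for x
    unfolding \<tau>_def Transposition.transpose_def using pq(4) by simp
  have inU: "\<tau> \<circ> \<sigma> \<in> U" if sU: "\<sigma> \<in> U" for \<sigma>
  proof -
    have sp: "\<sigma> permutes I" and sf: "\<forall>i\<in>I. ns (\<sigma> i) = ns i" using sU by (simp_all add: U_def)
    have "\<tau> \<circ> \<sigma> permutes I" by (rule permutes_compose[OF sp tp])
    moreover have "\<forall>i\<in>I. ns ((\<tau> \<circ> \<sigma>) i) = ns i" using sf nst by simp
    ultimately show ?thesis by (simp add: U_def)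
  qed
  have tt: "\<tau> \<circ> (\<tau> \<circ> \<sigma>) = \<sigma>" for \<sigma>
    unfolding \<tau>_def by (simp only: o_assoc transpose_comp_involutory id_comp)
  have sg: "sign (\<tau> \<circ> \<sigma>) = - sign \<sigma>" if sU: "\<sigma> \<in> U" for \<sigma>
  proof -
    have sp: "\<sigma> permutes I" using sU by (simp add: U_def)
    have p1: "permutation \<sigma>" using sp fin permutation_permutes by blast
    have p2: "permutation \<tau>" using tp fin permutation_permutes by blast
    have "sign (\<tau> \<circ> \<sigma>) = sign \<tau> * sign \<sigma>" by (rule sign_compose[OF p2 p1])
    moreover have "sign \<tau> = -1" unfolding \<tau>_def using pq(3) by (simp add: sign_swap_id)
    ultimately show ?thesis by simp
  qed
  have "(\<Sum>\<sigma>\<in>U. (of_int (sign \<sigma>) :: complex)) = (\<Sum>\<sigma>\<in>U. of_int (sign (\<tau> \<circ> \<sigma>)))"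
    by (rule sum.reindex_bij_witness[where i="\<lambda>\<sigma>. \<tau> \<circ> \<sigma>" and j="\<lambda>\<sigma>. \<tau> \<circ> \<sigma>"])
       (simp_all only: inU tt)
  also have "\<dots> = (\<Sum>\<sigma>\<in>U. - (of_int (sign \<sigma>) :: complex))"
    by (rule sum.cong[OF refl]) (simp add: sg)
  also have "\<dots> = - (\<Sum>\<sigma>\<in>U. (of_int (sign \<sigma>) :: complex))"
    by (rule sum_negf)
  finally have "(\<Sum>\<sigma>\<in>U. (of_int (sign \<sigma>) :: complex)) = 0" by simp
  then show ?thesis using False by (simp add: U_def)
qed

lemma sum_filter_mult:
  fixes f :: "'a \<Rightarrow> complex"
  assumes "finite A"
  shows "c * sum f {x\<in>A. Q x} = (\<Sum>x\<in>A. if Q x then c * f x else 0)"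
proof -
  have "c * sum f {x\<in>A. Q x} = c * (\<Sum>x\<in>A. if Q x then f x else 0)"
    by (simp only: sum.inter_filter[OF assms])
  also have "\<dots> = (\<Sum>x\<in>A. c * (if Q x then f x else 0))" by (rule sum_distrib_left)
  also have "\<dots> = (\<Sum>x\<in>A. if Q x then c * f x else 0)" by (rule sum.cong) auto
  finally show ?thesis .
qed

lemma key_identity:
  fixes F :: "(nat \<Rightarrow> nat) \<Rightarrow> complex" and I :: "nat set"
  assumes fin: "finite I" and finS: "finite S"
  shows "(\<Sum>\<sigma>\<in>{\<sigma>. \<sigma> permutes I}. of_int (sign \<sigma>) * (\<Sum>ns\<in>{ns \<in> I \<rightarrow>\<^sub>E S. \<forall>i\<in>I. ns (\<sigma> i) = ns i}. F ns))
       = (\<Sum>ns\<in>{ns \<in> I \<rightarrow>\<^sub>E S. inj_on ns I}. F ns)"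
proof -
  define P where "P = I \<rightarrow>\<^sub>E S"
  define T where "T = {\<sigma>. \<sigma> permutes I}"
  have finP: "finite P" using fin finS by (simp add: P_def finite_PiE)
  have finT: "finite T" using fin finite_permutations unfolding T_def by blast
  have "(\<Sum>\<sigma>\<in>T. of_int (sign \<sigma>) * (\<Sum>ns\<in>{ns \<in> P. \<forall>i\<in>I. ns (\<sigma> i) = ns i}. F ns))
      = (\<Sum>\<sigma>\<in>T. \<Sum>ns\<in>P. if (\<forall>i\<in>I. ns (\<sigma> i) = ns i) then of_int (sign \<sigma>) * F ns else 0)"
    by (rule sum.cong[OF refl], rule sum_filter_mult[OF finP])
  also have "\<dots> = (\<Sum>ns\<in>P. \<Sum>\<sigma>\<in>T. if (\<forall>i\<in>I. ns (\<sigma> i) = ns i) then of_int (sign \<sigma>) * F ns else 0)"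
    by (rule sum.swap)
  also have "\<dots> = (\<Sum>ns\<in>P. F ns * (\<Sum>\<sigma>\<in>{\<sigma>\<in>T. \<forall>i\<in>I. ns (\<sigma> i) = ns i}. (of_int (sign \<sigma>) :: complex)))"
  proof (rule sum.cong[OF refl])
    fix ns
    have "F ns * (\<Sum>\<sigma>\<in>{\<sigma>\<in>T. \<forall>i\<in>I. ns (\<sigma> i) = ns i}. (of_int (sign \<sigma>) :: complex))
       = (\<Sum>\<sigma>\<in>T. if (\<forall>i\<in>I. ns (\<sigma> i) = ns i) then F ns * of_int (sign \<sigma>) else 0)"
      by (rule sum_filter_mult[OF finT])
    also have "\<dots> = (\<Sum>\<sigma>\<in>T. if (\<forall>i\<in>I. ns (\<sigma> i) = ns i) then of_int (sign \<sigma>) * F ns else 0)"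
      by (simp only: mult.commute)
    finally show "(\<Sum>\<sigma>\<in>T. if (\<forall>i\<in>I. ns (\<sigma> i) = ns i) then of_int (sign \<sigma>) * F ns else 0)
      = F ns * (\<Sum>\<sigma>\<in>{\<sigma>\<in>T. \<forall>i\<in>I. ns (\<sigma> i) = ns i}. (of_int (sign \<sigma>) :: complex))" by simp
  qed
  also have "\<dots> = (\<Sum>ns\<in>P. if inj_on ns I then F ns else 0)"
  proof (rule sum.cong[OF refl])
    fix ns :: "nat \<Rightarrow> nat"
    have "{\<sigma>\<in>T. \<forall>i\<in>I. ns (\<sigma> i) = ns i} = {\<sigma>. \<sigma> permutes I \<and> (\<forall>i\<in>I. ns (\<sigma> i) = ns i)}"
      unfolding T_def by simp
    then show "F ns * (\<Sum>\<sigma>\<in>{\<sigma>\<in>T. \<forall>i\<in>I. ns (\<sigma> i) = ns i}. (of_int (sign \<sigma>) :: complex)) =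
      (if inj_on ns I then F ns else 0)" using sign_sum[OF fin, of ns] by simp
  qed
  also have "\<dots> = (\<Sum>ns\<in>{ns \<in> P. inj_on ns I}. F ns)"
    by (rule sum.inter_filter[OF finP, symmetric])
  finally show ?thesis by (simp only: P_def T_def)
qed

lemma cycle_summable:
  fixes a :: "nat \<Rightarrow> nat \<Rightarrow> complex" and C :: "nat set" and k :: "nat \<Rightarrow> nat"
  assumes conv: "\<And>(m'::nat) (k'::nat \<Rightarrow> nat). m' \<ge> 1 \<Longrightarrow> (\<forall>j\<in>{1..m'}. k' j \<ge> 1) \<Longrightarrow>
                   summable (\<lambda>n. \<Prod>j=1..m'. a (Suc n) (k' j))"
    and C: "finite C" "C \<noteq> {}" "\<forall>i\<in>C. k i \<ge> 1"
  shows "summable (\<lambda>n. \<Prod>i\<in>C. a (Suc n) (k i))"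
proof -
  define c where "c = card C"
  have c1: "c \<ge> 1" using C by (simp add: c_def Suc_le_eq card_gt_0_iff)
  obtain h where h: "bij_betw h {0..<c} C" using ex_bij_betw_nat_finite[OF C(1)] c_def by blast
  have b1: "bij_betw (\<lambda>j. j - 1) {1..c} {0..<c}"
    by (rule bij_betw_byWitness[where f'=Suc]) auto
  have e: "bij_betw (\<lambda>j. h (j - 1)) {1..c} C"
    using bij_betw_trans[OF b1 h] by (simp add: comp_def)
  have eq: "(\<Prod>i\<in>C. g i) = (\<Prod>j=1..c. g (h (j - 1)))" for g :: "nat \<Rightarrow> complex"
    using prod.reindex_bij_betw[OF e, of g] by simp
  have "\<forall>j\<in>{1..c}. k (h (j - 1)) \<ge> 1" using e C(3) bij_betwE by blast
  from conv[OF c1 this] show ?thesis by (simp add: eq)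
qed

theorem mainTheorem1:
  fixes a :: "nat \<Rightarrow> nat \<Rightarrow> complex" and m :: nat and k :: "nat \<Rightarrow> nat"
  assumes conv: "\<And>(m'::nat) (k'::nat \<Rightarrow> nat). m' \<ge> 1 \<Longrightarrow> (\<forall>j\<in>{1..m'}. k' j \<ge> 1) \<Longrightarrow>
                   summable (\<lambda>n. \<Prod>j=1..m'. a (Suc n) (k' j))"
    and m: "m \<ge> 1"
    and k: "\<forall>j\<in>{1..m}. k j \<ge> 1"
  shows "(\<lambda>N. distinct_sum a m k N) \<longlonglongrightarrow>
           (\<Sum>\<sigma> | \<sigma> permutes {1..m}. of_int (sign \<sigma>) * A_sigma a m k \<sigma>)"
proof -
  have ds: "distinct_sum a m k N = (\<Sum>\<sigma> | \<sigma> permutes {1..m}. of_int (sign \<sigma>) *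
      (\<Prod>C\<in>perm_cycles m \<sigma>. \<Sum>n<N. \<Prod>i\<in>C. a (Suc n) (k i)))" for N
  proof -
    have "(\<Sum>\<sigma> | \<sigma> permutes {1..m}. of_int (sign \<sigma>) *
      (\<Prod>C\<in>perm_cycles m \<sigma>. \<Sum>n<N. \<Prod>i\<in>C. a (Suc n) (k i)))
      = (\<Sum>\<sigma> | \<sigma> permutes {1..m}. of_int (sign \<sigma>) *
      (\<Sum>ns\<in>{ns \<in> {1..m} \<rightarrow>\<^sub>E {1..N}. \<forall>i\<in>{1..m}. ns (\<sigma> i) = ns i}. \<Prod>i\<in>{1..m}. a (ns i) (k i)))"
    proof (rule sum.cong[OF refl])
      fix \<sigma> assume "\<sigma> \<in> {\<sigma>. \<sigma> permutes {1..m}}"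
      then have p: "\<sigma> permutes {1..m}" by simp
      show "of_int (sign \<sigma>) * (\<Prod>C\<in>perm_cycles m \<sigma>. \<Sum>n<N. \<Prod>i\<in>C. a (Suc n) (k i)) =
        of_int (sign \<sigma>) * (\<Sum>ns\<in>{ns \<in> {1..m} \<rightarrow>\<^sub>E {1..N}. \<forall>i\<in>{1..m}. ns (\<sigma> i) = ns i}. \<Prod>i\<in>{1..m}. a (ns i) (k i))"
      proof -
        have "(\<Prod>C\<in>perm_cycles m \<sigma>. \<Sum>n<N. \<Prod>i\<in>C. a (Suc n) (k i)) =
              (\<Prod>C\<in>perm_cycles m \<sigma>. \<Sum>n=1..N. \<Prod>i\<in>C. a n (k i))"
        proof (rule prod.cong[OF refl])
          fix C :: "nat set"
          show "(\<Sum>n<N. \<Prod>i\<in>C. a (Suc n) (k i)) = (\<Sum>n=1..N. \<Prod>i\<in>C. a n (k i))"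
            using sum_bounds_lt_plus1[of "\<lambda>n. \<Prod>i\<in>C. a n (k i)" N] by simp
        qed
        also have "\<dots> = (\<Sum>ns\<in>{ns \<in> {1..m} \<rightarrow>\<^sub>E {1..N}. \<forall>i\<in>{1..m}. ns (\<sigma> i) = ns i}. \<Prod>i\<in>{1..m}. a (ns i) (k i))"
          unfolding perm_cycles_def
          by (rule cycles_expand[OF p finite_atLeastAtMost finite_atLeastAtMost])
        finally show ?thesis by simp
      qed
    qed
    also have "\<dots> = distinct_sum a m k N"
      unfolding distinct_sum_def by (rule key_identity[OF finite_atLeastAtMost finite_atLeastAtMost])
    finally show ?thesis by simp
  qed
  have lim: "(\<lambda>N. \<Sum>n<N. \<Prod>i\<in>C. a (Suc n) (k i)) \<longlonglongrightarrow> (\<Sum>n. \<Prod>i\<in>C. a (Suc n) (k i))"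
    if p: "\<sigma> permutes {1..m}" and C: "C \<in> perm_cycles m \<sigma>" for \<sigma> C
  proof -
    obtain j where j: "j \<in> {1..m}" "C = orbit \<sigma> j" using C unfolding perm_cycles_def by blast
    have sub: "C \<subseteq> {1..m}" using permutes_orbit_subset[OF p j(1)] j(2) by simp
    have ne: "C \<noteq> {}" using j(2) orbit_nonempty by simp
    have fC: "finite C" using sub finite_subset by blast
    have kC: "\<forall>i\<in>C. k i \<ge> 1" using sub k by blast
    have "summable (\<lambda>n. \<Prod>i\<in>C. a (Suc n) (k i))"
      by (rule cycle_summable[OF conv fC ne kC])
    then show ?thesis by (rule summable_LIMSEQ)
  qed
  show ?thesis
    unfolding ds A_sigma_def
  proof (intro tendsto_sum tendsto_mult tendsto_const tendsto_prod)
    fix \<sigma> C assume "\<sigma> \<in> {\<sigma>. \<sigma> permutes {1..m}}" "C \<in> perm_cycles m \<sigma>"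
    then show "(\<lambda>N. \<Sum>n<N. \<Prod>i\<in>C. a (Suc n) (k i)) \<longlonglongrightarrow> (\<Sum>n. \<Prod>i\<in>C. a (Suc n) (k i))"
      using lim by blast
  qed
qed

end
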